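(* Let $\alpha>2$ and $N>0$, and define for $p\in[0,1]$ and $\beta>0$ \[ R(p,\beta)=p\,\log(1+\beta)\,e^{-N p\,\beta^{2/\alpha}} . \] Let $\Lambda^*=\Lambda^*(\alpha)>0$ denote the unique solution of \[ \frac{\alpha}{2}=\left(1+{\Lambda^*}^{\alpha/2}\right)\log\left(1+\frac{1}{{\Lambda^*}^{\alpha/2}}\right). \] If $N>\Lambda^*$, then $R$ is maximized over $[0,1]\times(0,\infty)$ at $p^*=\Lambda^*/N$ and $\beta^*={\Lambda^*}^{-\alpha/2}$. If $N\le\Lambda^*$, then $R$ is maximized at $p^*=1$ and $\beta^*$ equal to the unique solution of \[ \frac{\alpha}{2N{\beta^*}^{2/\alpha}}=\left(1+\frac{1}{\beta^*}\right)\log(1+\beta^* ). \]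
   Context: $R(p,\beta)$ is the limiting expected throughput per link of a single wireless network using a random access protocol with access probability $p$ and target signal-to-interference ratio $\beta$, where $N$ is the average number of nodes per transmission disc and $\alpha$ is the pathloss exponent. $\log$ denotes the natural logarithm. *)

theory Defs
  imports Complex_Main
begin

definition R :: "real \<Rightarrow> real \<Rightarrow> real \<Rightarrow> real \<Rightarrow> real" where
  "R \<alpha> N p \<beta> = p * ln (1 + \<beta>) * exp (- N * p * \<beta> powr (2 / \<alpha>))"

definition lambda_eq :: "real \<Rightarrow> real \<Rightarrow> bool" where
  "lambda_eq \<alpha> \<Lambda> \<longleftrightarrow> \<Lambda> > 0 \<and>
     \<alpha> / 2 = (1 + \<Lambda> powr (\<alpha> / 2)) * ln (1 + 1 / \<Lambda> powr (\<alpha> / 2))"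

definition Lambda_star :: "real \<Rightarrow> real" where
  "Lambda_star \<alpha> = (THE \<Lambda>. lambda_eq \<alpha> \<Lambda>)"

definition beta_eq :: "real \<Rightarrow> real \<Rightarrow> real \<Rightarrow> bool" where
  "beta_eq \<alpha> N \<beta> \<longleftrightarrow> \<beta> > 0 \<and>
     \<alpha> / (2 * N * \<beta> powr (2 / \<alpha>)) = (1 + 1 / \<beta>) * ln (1 + \<beta>)"

definition is_maximizer :: "real \<Rightarrow> real \<Rightarrow> real \<Rightarrow> real \<Rightarrow> bool" where
  "is_maximizer \<alpha> N p0 b0 \<longleftrightarrow> p0 \<in> {0..1} \<and> b0 > 0 \<and>
     (\<forall>p \<in> {0..1}. \<forall>b > 0. R \<alpha> N p b \<le> R \<alpha> N p0 b0)"

end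

theory Submission imports Defs begin

definition hh :: "real \<Rightarrow> real" where "hh x = (1 + 1/x) * ln (1+x)"

lemma hh_deriv: assumes "x > 0"
  shows "(hh has_real_derivative (x - ln (1+x)) / x^2) (at x)"
  unfolding hh_def
  using assms
  apply (auto intro!: derivative_eq_intros)
  apply (simp add: divide_simps power2_eq_square)
  apply (simp add: algebra_simps)
  done

lemma hh_mono: assumes "0 < x" "x < y" shows "hh x < hh y"
proof (rule DERIV_pos_imp_increasing[OF assms(2)])
  fix t assume "x \<le> t" "t \<le> y"
  then have t: "t > 0" using assms by simp
  have "ln (1+t) < t" using ln_add_one_self_less_self[OF t] .
  then show "\<exists>D. (hh has_real_derivative D) (at t) \<and> D > 0"
    using hh_deriv[OF t] t by (intro exI[of _ "(t - ln (1+t)) / t^2"]) auto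
qed

lemma hh_le_iff: "0 < x \<Longrightarrow> 0 < y \<Longrightarrow> hh x \<le> hh y \<longleftrightarrow> x \<le> y"
  by (metis hh_mono linorder_not_le order_less_le)

lemma hh_eq_iff: "0 < x \<Longrightarrow> 0 < y \<Longrightarrow> hh x = hh y \<longleftrightarrow> x = y"
  using hh_le_iff[of x y] hh_le_iff[of y x] by (auto intro: order_antisym)

lemma hh_pos: "0 < x \<Longrightarrow> 0 < hh x"
  unfolding hh_def by (auto intro!: mult_pos_pos add_pos_pos)

lemma hh_cont: "0 < a \<Longrightarrow> continuous_on {a..b} hh"
  by (rule continuous_at_imp_continuous_on) (auto intro!: DERIV_isCont hh_deriv)

lemma hh_exists: assumes "\<alpha> > 2" shows "\<exists>x>0. hh x = \<alpha>/2"
proof -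
  define a where "a = (\<alpha>/2 - 1)/2"
  define b where "b = exp (\<alpha>/2)"
  have a: "a > 0" using assms by (simp add: a_def)
  have "hh a \<le> (1 + 1/a) * a" unfolding hh_def
    using a ln_add_one_self_le_self[of a] by (intro mult_left_mono) auto
  also have "\<dots> = 1 + a" using a by (simp add: field_simps)
  also have "\<dots> \<le> \<alpha>/2" using assms by (simp add: a_def field_simps)
  finally have ha: "hh a \<le> \<alpha>/2" .
  have b: "b > 0" by (simp add: b_def)
  have "\<alpha>/2 = ln b" by (simp add: b_def)
  also have "\<dots> \<le> ln (1+b)" using b by simp
  also have "\<dots> \<le> hh b" unfolding hh_def using b
    by (simp add: algebra_simps)
  finally have hb: "\<alpha>/2 \<le> hh b" .
  have "a \<le> b"
  proof -
    have "a < 1 + a" by simp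
    also have "1 + a \<le> exp a" by (rule exp_ge_add_one_self)
    also have "exp a \<le> b" unfolding b_def a_def using assms by simp
    finally show ?thesis by simp
  qed
  from IVT'[of hh a "\<alpha>/2" b, OF ha hb this hh_cont[OF a]]
  obtain x where "a \<le> x" "hh x = \<alpha>/2" by auto
  then show ?thesis using a by (intro exI[of _ x]) auto
qed

lemma lambda_eq_iff: assumes "\<alpha> > 0"
  shows "lambda_eq \<alpha> L \<longleftrightarrow> L > 0 \<and> hh (L powr (-\<alpha>/2)) = \<alpha>/2"
proof (cases "L > 0")
  case True
  have e: "L powr (-\<alpha>/2) = 1 / L powr (\<alpha>/2)"
    by (simp add: powr_minus_divide[symmetric])
  have p: "L powr (\<alpha>/2) > 0" using True by simp
  show ?thesis unfolding lambda_eq_def hh_def e using True p by (auto simp: field_simps)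
qed (auto simp: lambda_eq_def)

lemma ex1_lambda: assumes "\<alpha> > 2" shows "\<exists>!L. lambda_eq \<alpha> L"
proof -
  have a0: "\<alpha> > 0" using assms by simp
  obtain x where x: "x > 0" "hh x = \<alpha>/2" using hh_exists[OF assms] by blast
  define L where "L = x powr (-2/\<alpha>)"
  have "L powr (-\<alpha>/2) = x" unfolding L_def using x a0 by (simp add: powr_powr)
  then have "lambda_eq \<alpha> L" using lambda_eq_iff[OF a0] x by (simp add: L_def)
  moreover have "L' = L" if "lambda_eq \<alpha> L'" for L'
  proof -
    have L': "L' > 0" "hh (L' powr (-\<alpha>/2)) = \<alpha>/2" using that lambda_eq_iff[OF a0] by auto
    have "L' powr (-\<alpha>/2) = x" using hh_eq_iff[of "L' powr (-\<alpha>/2)" x] L' x by simp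
    then have "(L' powr (-\<alpha>/2)) powr (-2/\<alpha>) = L" by (simp add: L_def)
    then show ?thesis using L' a0 by (simp add: powr_powr)
  qed
  ultimately show ?thesis by blast
qed

definition gg :: "real \<Rightarrow> real \<Rightarrow> real" where "gg d b = ln (1+b) * b powr (-d)"

lemma gg_deriv: assumes "x > 0"
  shows "(gg d has_real_derivative x powr (-d) / (1+x) * (1 - d * hh x)) (at x)"
  unfolding hh_def gg_def[abs_def]
  using assms
  apply (auto intro!: derivative_eq_intros)
  apply (simp add: divide_simps powr_diff powr_minus)
  done

lemma gg_up: assumes "0 < x" "x \<le> y" "y \<le> b0" "d * hh b0 = 1" "d > 0"
  shows "gg d x \<le> gg d y"
proof (rule DERIV_nonneg_imp_nondecreasing[OF assms(2)])
  fix t assume t1: "x \<le> t" "t \<le> y"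
  then have t: "t > 0" using assms by simp
  have "hh t \<le> hh b0" using hh_le_iff[of t b0] t t1 assms by simp
  then have "d * hh t \<le> 1" using assms(4,5) by (metis mult_left_mono less_imp_le)
  then have "t powr (-d) / (1+t) * (1 - d * hh t) \<ge> 0" using t by simp
  then show "\<exists>D. (gg d has_real_derivative D) (at t) \<and> D \<ge> 0"
    using gg_deriv[OF t] by blast
qed

lemma gg_down: assumes "b0 \<le> x" "x \<le> y" "0 < b0" "d * hh b0 = 1" "d > 0"
  shows "gg d y \<le> gg d x"
proof (rule DERIV_nonpos_imp_nonincreasing[OF assms(2)])
  fix t assume t1: "x \<le> t" "t \<le> y"
  then have t: "t > 0" using assms by simp
  have "hh b0 \<le> hh t" using hh_le_iff[of b0 t] t t1 assms by simp
  then have "d * hh t \<ge> 1" using assms(4,5) by (metis mult_left_mono less_imp_le)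
  then have "t powr (-d) / (1+t) * (1 - d * hh t) \<le> 0" using t
    by (intro mult_nonneg_nonpos) auto
  then show "\<exists>D. (gg d has_real_derivative D) (at t) \<and> D \<le> 0"
    using gg_deriv[OF t] by blast
qed

lemma gg_max: assumes "0 < x" "0 < b0" "d * hh b0 = 1" "d > 0"
  shows "gg d x \<le> gg d b0"
proof (cases "x \<le> b0")
  case True
  then show ?thesis using gg_up[of x b0 b0 d] assms by simp
next
  case False
  then show ?thesis using gg_down[of b0 b0 x d] assms by simp
qed

definition kk :: "real \<Rightarrow> real \<Rightarrow> real" where "kk d b = b powr d * hh b"

lemma kk_mono: assumes "0 < x" "x < y" "d > 0" shows "kk d x < kk d y"
proof -
  have "x powr d * hh x < x powr d * hh y" using assms hh_mono by simp
  also have "\<dots> \<le> y powr d * hh y" using assms hh_pos[of y]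
    by (intro mult_right_mono powr_mono2) auto
  finally show ?thesis by (simp add: kk_def)
qed

lemma kk_le_iff: "0 < x \<Longrightarrow> 0 < y \<Longrightarrow> d > 0 \<Longrightarrow> kk d x \<le> kk d y \<longleftrightarrow> x \<le> y"
  by (metis kk_mono linorder_not_le order_less_le)

lemma kk_cont: "0 < a \<Longrightarrow> continuous_on {a..b} (kk d)"
proof -
  assume a: "0 < a"
  have "continuous_on {a..b} (\<lambda>b. b powr d)" using a by (intro continuous_intros) auto
  from continuous_on_mult[OF this hh_cont[OF a]] show ?thesis unfolding kk_def[abs_def] .
qed

definition FF :: "real \<Rightarrow> real \<Rightarrow> real \<Rightarrow> real" where
  "FF N d b = ln (1+b) * exp (- N * b powr d)"

lemma FF_deriv: assumes "x > 0"
  shows "(FF N d has_real_derivative exp (- N * x powr d) / (1+x) * (1 - N * d * kk d x)) (at x)"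
  unfolding hh_def FF_def[abs_def] kk_def
  using assms
  apply (auto intro!: derivative_eq_intros simp: field_simps powr_diff powr_minus)
  done

lemma FF_max: assumes "0 < x" "0 < bs" "N * d * kk d bs = 1" "d > 0" "N > 0"
  shows "FF N d x \<le> FF N d bs"
proof (cases "x \<le> bs")
  case True
  show ?thesis
  proof (rule DERIV_nonneg_imp_nondecreasing[OF True])
    fix t assume t1: "x \<le> t" "t \<le> bs"
    then have t: "t > 0" using assms by simp
    have "kk d t \<le> kk d bs" using kk_le_iff[of t bs d] t t1 assms by simp
    then have "N * d * kk d t \<le> 1" using assms by (metis mult_left_mono less_imp_le mult_pos_pos)
    then have "exp (- N * t powr d) / (1+t) * (1 - N * d * kk d t) \<ge> 0" using t by simp
    then show "\<exists>D. (FF N d has_real_derivative D) (at t) \<and> D \<ge> 0"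
      using FF_deriv[OF t] by blast
  qed
next
  case False
  show ?thesis
  proof (rule DERIV_nonpos_imp_nonincreasing[of bs x "FF N d"])
    show "bs \<le> x" using False by simp
    fix t assume t1: "bs \<le> t" "t \<le> x"
    then have t: "t > 0" using assms by simp
    have "kk d bs \<le> kk d t" using kk_le_iff[of bs t d] t t1 assms by simp
    then have "N * d * kk d t \<ge> 1" using assms by (metis mult_left_mono less_imp_le mult_pos_pos)
    then have "exp (- N * t powr d) / (1+t) * (1 - N * d * kk d t) \<le> 0" using t
      by (intro mult_nonneg_nonpos) auto
    then show "\<exists>D. (FF N d has_real_derivative D) (at t) \<and> D \<le> 0"
      using FF_deriv[OF t] by blast
  qed
qed

lemma pexp1: fixes c p :: real assumes "c > 0" "p \<ge> 0" shows "p * exp (- c * p) \<le> exp (-1) / c"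
proof -
  have "c * p \<le> exp (c * p - 1)" using exp_ge_add_one_self[of "c*p - 1"] by simp
  also have "\<dots> = exp (-1) * exp (c * p)" by (simp add: exp_diff exp_minus field_simps)
  finally have "c * p * exp (- c * p) \<le> exp (-1)"
    by (simp add: exp_minus field_simps)
  then show ?thesis using assms by (simp add: field_simps)
qed

lemma pexp2: fixes c p :: real assumes "c > 0" "c \<le> 1" "p \<ge> 0" "p \<le> 1" shows "p * exp (- c * p) \<le> exp (- c)"
proof -
  have "p \<le> 1 + c * (p - 1)"
  proof -
    have "(1 - c) * (p - 1) \<le> 0" using assms by (intro mult_nonneg_nonpos) auto
    then show ?thesis by (simp add: algebra_simps)
  qed
  also have "\<dots> \<le> exp (c * (p - 1))" by (rule exp_ge_add_one_self)
  finally have "p * exp (- c * p) \<le> exp (c * (p - 1)) * exp (- c * p)"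
    by (intro mult_right_mono) auto
  also have "\<dots> = exp (- c)" by (simp add: exp_add[symmetric] algebra_simps)
  finally show ?thesis .
qed

lemma Rbound1: assumes "p \<ge> 0" "b > 0" "N > 0"
  shows "R \<alpha> N p b \<le> exp (-1) / N * gg (2/\<alpha>) b"
proof -
  define c where "c = N * b powr (2/\<alpha>)"
  have c: "c > 0" using assms by (simp add: c_def)
  have l: "ln (1+b) \<ge> 0" using assms by simp
  have "R \<alpha> N p b = ln (1+b) * (p * exp (- c * p))"
    by (simp add: R_def c_def algebra_simps)
  also have "\<dots> \<le> ln (1+b) * (exp (-1) / c)"
    by (rule mult_left_mono[OF pexp1[OF c assms(1)] l])
  also have "\<dots> = exp (-1) / N * gg (2/\<alpha>) b"
    using assms by (simp add: c_def gg_def powr_minus field_simps)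
  finally show ?thesis .
qed

lemma Rbound2: assumes "p \<ge> 0" "p \<le> 1" "b > 0" "N > 0" "N * b powr (2/\<alpha>) \<le> 1"
  shows "R \<alpha> N p b \<le> FF N (2/\<alpha>) b"
proof -
  define c where "c = N * b powr (2/\<alpha>)"
  have c: "c > 0" using assms by (simp add: c_def)
  have l: "ln (1+b) \<ge> 0" using assms by simp
  have "R \<alpha> N p b = ln (1+b) * (p * exp (- c * p))"
    by (simp add: R_def c_def algebra_simps)
  also have "\<dots> \<le> ln (1+b) * exp (- c)"
    by (rule mult_left_mono[OF pexp2[OF c _ assms(1,2)] l]) (use assms in \<open>simp add: c_def\<close>)
  also have "\<dots> = FF N (2/\<alpha>) b"
    by (simp add: c_def FF_def)
  finally show ?thesis .
qed

theorem theorem1: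
  fixes \<alpha> N :: real
  assumes "\<alpha> > 2" and "N > 0"
  shows "(\<exists>!\<Lambda>. lambda_eq \<alpha> \<Lambda>)
    \<and> (N > Lambda_star \<alpha> \<longrightarrow>
         is_maximizer \<alpha> N (Lambda_star \<alpha> / N) (Lambda_star \<alpha> powr (- \<alpha> / 2)))
    \<and> (N \<le> Lambda_star \<alpha> \<longrightarrow>
         (\<exists>!\<beta>. beta_eq \<alpha> N \<beta>) \<and> is_maximizer \<alpha> N 1 (THE \<beta>. beta_eq \<alpha> N \<beta>))"
proof -
  have a0: "\<alpha> > 0" using assms by simp
  define d where "d = 2/\<alpha>"
  have d0: "d > 0" using a0 by (simp add: d_def)
  have ex1: "\<exists>!\<Lambda>. lambda_eq \<alpha> \<Lambda>" by (rule ex1_lambda[OF assms(1)])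
  define L where "L = Lambda_star \<alpha>"
  have "lambda_eq \<alpha> L" unfolding L_def Lambda_star_def by (rule theI'[OF ex1])
  then have L0: "L > 0" and hb0: "hh (L powr (-\<alpha>/2)) = \<alpha>/2"
    using lambda_eq_iff[OF a0] by auto
  define b0 where "b0 = L powr (-\<alpha>/2)"
  have b0: "b0 > 0" using L0 by (simp add: b0_def)
  have dh: "d * hh b0 = 1" using hb0 a0 by (simp add: d_def b0_def)
  have b0d: "b0 powr d = 1 / L"
  proof -
    have "b0 powr d = L powr (-\<alpha>/2 * (2/\<alpha>))" by (simp add: b0_def d_def powr_powr)
    also have "-\<alpha>/2 * (2/\<alpha>) = -1" using a0 by simp
    finally show ?thesis using L0 by (simp add: powr_minus_divide)
  qed
  have b0md: "b0 powr (-d) = L" using b0d b0 L0 by (simp add: powr_minus)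
  have part1: "N > L \<longrightarrow> is_maximizer \<alpha> N (L / N) b0"
  proof
    assume NL: "N > L"
    have "R \<alpha> N (L/N) b0 = exp (-1) / N * gg d b0"
      using assms(2) L0 b0d b0md by (simp add: R_def gg_def d_def field_simps)
    moreover have "R \<alpha> N p b \<le> exp (-1) / N * gg d b0" if "p \<in> {0..1}" "b > 0" for p b
    proof -
      have "R \<alpha> N p b \<le> exp (-1) / N * gg d b"
        using Rbound1[of p b N \<alpha>] that assms(2) by (simp add: d_def)
      also have "\<dots> \<le> exp (-1) / N * gg d b0"
        using gg_max[OF that(2) b0 dh d0] assms(2) by (intro mult_left_mono) auto
      finally show ?thesis .
    qed
    ultimately show "is_maximizer \<alpha> N (L / N) b0"
      unfolding is_maximizer_def using NL L0 b0 assms(2) by auto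
  qed
  have part2: "N \<le> L \<longrightarrow> (\<exists>!\<beta>. beta_eq \<alpha> N \<beta>) \<and> is_maximizer \<alpha> N 1 (THE \<beta>. beta_eq \<alpha> N \<beta>)"
  proof
    assume NL: "N \<le> L"
    have beq: "beta_eq \<alpha> N b \<longleftrightarrow> b > 0 \<and> kk d b = \<alpha> / (2*N)" for b
    proof (cases "b > 0")
      case True
      have "b powr (2/\<alpha>) > 0" using True by simp
      then show ?thesis unfolding beta_eq_def kk_def hh_def d_def using True assms(2)
        by (auto simp: field_simps)
    qed (auto simp: beta_eq_def)
    define b1 where "b1 = N powr (-\<alpha>/2)"
    have b1: "b1 > 0" using assms(2) by (simp add: b1_def)
    have b1d: "b1 powr d = 1 / N"
    proof -
      have "b1 powr d = N powr (-\<alpha>/2 * (2/\<alpha>))" by (simp add: b1_def d_def powr_powr)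
      also have "-\<alpha>/2 * (2/\<alpha>) = -1" using a0 by simp
      finally show ?thesis using assms(2) by (simp add: powr_minus_divide)
    qed
    have b1md: "b1 powr (-d) = N" using b1d b1 assms(2) by (simp add: powr_minus)
    have b01: "b0 \<le> b1" unfolding b0_def b1_def using NL assms(2) a0
      by (intro powr_mono2') auto
    have hb0': "hh b0 = \<alpha>/2" using hb0 by (simp add: b0_def)
    have "kk d b0 = (\<alpha>/2) / L" unfolding kk_def b0d hb0' by simp
    also have "\<dots> \<le> (\<alpha>/2) / N" using NL assms(2) a0 by (intro divide_left_mono) auto
    finally have k0: "kk d b0 \<le> \<alpha> / (2*N)" by simp
    have "hh b0 \<le> hh b1" using hh_le_iff[OF b0 b1] b01 by simp
    then have "(\<alpha>/2) / N \<le> hh b1 / N" using hb0' assms(2) by (intro divide_right_mono) auto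
    also have "hh b1 / N = kk d b1" unfolding kk_def b1d by simp
    finally have k1: "\<alpha> / (2*N) \<le> kk d b1" by simp
    obtain bx where bx: "b0 \<le> bx" "bx \<le> b1" "kk d bx = \<alpha> / (2*N)"
      using IVT'[of "kk d" b0 "\<alpha> / (2*N)" b1, OF k0 k1 b01 kk_cont[OF b0]] by auto
    have ex1b: "\<exists>!\<beta>. beta_eq \<alpha> N \<beta>"
    proof (rule ex1I[of _ bx])
      show "beta_eq \<alpha> N bx" using beq bx b0 by auto
      fix y assume "beta_eq \<alpha> N y"
      then have y: "y > 0" "kk d y = \<alpha> / (2*N)" using beq by auto
      have bx0: "bx > 0" using bx b0 by simp
      show "y = bx" using kk_le_iff[OF y(1) bx0 d0] kk_le_iff[OF bx0 y(1) d0] y bx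
        by (auto intro: order_antisym)
    qed
    define bs where "bs = (THE \<beta>. beta_eq \<alpha> N \<beta>)"
    have "beta_eq \<alpha> N bs" unfolding bs_def by (rule theI'[OF ex1b])
    then have bs: "bs > 0" "kk d bs = \<alpha> / (2*N)" using beq by auto
    have Nk: "N * d * kk d bs = 1" using bs assms(2) a0 by (simp add: d_def)
    have Rbs: "R \<alpha> N 1 bs = FF N d bs" by (simp add: R_def FF_def d_def)
    have "R \<alpha> N p b \<le> FF N d bs" if "p \<in> {0..1}" "b > 0" for p b
    proof (cases "N * b powr d \<le> 1")
      case True
      have "R \<alpha> N p b \<le> FF N d b" using Rbound2[of p b N \<alpha>] that True assms(2)
        by (simp add: d_def)
      also have "\<dots> \<le> FF N d bs" by (rule FF_max[OF that(2) bs(1) Nk d0 assms(2)])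
      finally show ?thesis .
    next
      case False
      have "b1 \<le> b"
      proof (rule ccontr)
        assume "\<not> b1 \<le> b"
        then have "b powr d \<le> b1 powr d" using that d0 by (intro powr_mono2) auto
        then show False using False b1d assms(2) by (simp add: field_simps)
      qed
      have "R \<alpha> N p b \<le> exp (-1) / N * gg d b"
        using Rbound1[of p b N \<alpha>] that assms(2) by (simp add: d_def)
      also have "\<dots> \<le> exp (-1) / N * gg d b1"
        using gg_down[OF b01 \<open>b1 \<le> b\<close> b0 dh d0] assms(2) by (intro mult_left_mono) auto
      also have "\<dots> = FF N d b1"
        using b1d b1md assms(2) by (simp add: gg_def FF_def field_simps)
      also have "\<dots> \<le> FF N d bs" by (rule FF_max[OF b1 bs(1) Nk d0 assms(2)])
      finally show ?thesis .
    qed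
    then have "is_maximizer \<alpha> N 1 bs" unfolding is_maximizer_def using bs Rbs by auto
    then show "(\<exists>!\<beta>. beta_eq \<alpha> N \<beta>) \<and> is_maximizer \<alpha> N 1 (THE \<beta>. beta_eq \<alpha> N \<beta>)"
      using ex1b by (simp add: bs_def)
  qed
  show ?thesis using ex1 part1 part2 by (simp add: L_def b0_def)
qed
end
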